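(* Suppose $r>2$, $0<\beta<1$ and $r^2<\frac{(1+\beta)^2}{\beta}$. Then $$\frac{1}{r^{1+\beta}}\frac{(1+\beta)^{1+\beta}}{\beta^\beta}<\left(\frac2r\right)^{1+\beta}\left(\frac4{r^2}\right)^{-\beta}\left(\sqrt{1-\frac4{r^2}}+1\right)^{\beta-1}=\left(\frac r2-\sqrt{\frac{r^2}{4}-1}\right)^{1-\beta}.$$ *)

theory Defs
  imports Complex_Main
begin

end

theory Submission
  imports Defs
begin

theorem lemma3:
  fixes r \<beta> :: real
  assumes "r > 2" and "0 < \<beta>" and "\<beta> < 1"
    and "r^2 < (1 + \<beta>)^2 / \<beta>"
  shows "1 / r powr (1 + \<beta>) * ((1 + \<beta>) powr (1 + \<beta>) / \<beta> powr \<beta>)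
           < (2 / r) powr (1 + \<beta>) * (4 / r^2) powr (- \<beta>)
             * (sqrt (1 - 4 / r^2) + 1) powr (\<beta> - 1)
         \<and> (2 / r) powr (1 + \<beta>) * (4 / r^2) powr (- \<beta>)
             * (sqrt (1 - 4 / r^2) + 1) powr (\<beta> - 1)
           = (r / 2 - sqrt (r^2 / 4 - 1)) powr (1 - \<beta>)"
proof -
  define d where "d = sqrt (r^2/4 - 1)"
  define x where "x = r/2 - d"
  define s where "s = sqrt (1 - 4 / r^2)"
  define u where "u = x^2"
  have r0: "r > 0" using assms by simp
  have b0: "\<beta> > 0" using assms by simp
  have "r^2/4 - 1 \<ge> 0"
  proof -
    have "r*r \<ge> 2*2" using assms(1) by (intro mult_mono) auto
    thus ?thesis by (simp add: power2_eq_square)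
  qed
  hence dpos: "d \<ge> 0" unfolding d_def by simp
  have dsq: "d^2 = r^2/4 - 1" unfolding d_def using \<open>r^2/4 - 1 \<ge> 0\<close> by simp
  have dlt: "d < r/2"
  proof -
    have "d^2 < (r/2)^2" using dsq by (simp add: power2_eq_square)
    thus ?thesis using dpos r0 by (meson power_less_imp_less_base less_le_trans order_refl divide_pos_pos zero_less_numeral less_imp_le)
  qed
  have x0: "x > 0" using dlt x_def by simp
  have xr: "x * (r - x) = 1" unfolding x_def using dsq
    by (simp add: algebra_simps power2_eq_square)
  have rx: "r - x > 1" unfolding x_def using dpos assms(1) by simp
  have x1: "x < 1"
  proof -
    have "x = 1 / (r - x)" using xr rx by (simp add: field_simps)
    also have "1 / (r - x) < 1" using rx by simp
    finally show ?thesis .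
  qed
  have rxe: "r = (1 + u) / x" unfolding u_def using xr x0
    by (simp add: field_simps power2_eq_square)
  have u0: "u > 0" "u < 1" unfolding u_def using x0 x1
    by (auto simp: power_less_one_iff)
  have "r^2 = (1+u)^2/u" unfolding rxe u_def by (simp add: power_divide)
  hence "(1+u)^2/u < (1+\<beta>)^2/\<beta>" using assms(4) by simp
  hence "(1+u)^2 * \<beta> < (1+\<beta>)^2 * u" using u0 b0 by (simp add: field_simps)
  hence "(\<beta> - u) * (1 - u*\<beta>) < 0" by (simp add: algebra_simps power2_eq_square)
  moreover have "1 - u*\<beta> > 0" using u0 assms(2,3)
    by (smt (verit) mult_less_cancel_right1 mult_pos_pos)
  ultimately have ub: "u > \<beta>" by (smt (verit) mult_nonneg_nonneg)
  have s_eq: "s = 2*d/r"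
  proof -
    have rr: "r*r = 4 + 4*d*d" using dsq by (simp add: field_simps power2_eq_square)
    have "1 - 4/r^2 = (r*r - 4)/(r*r)" using r0 by (simp add: field_simps power2_eq_square)
    also have "\<dots> = (4*d*d)/(r*r)" using rr by simp
    also have "\<dots> = (2*d/r)^2" by (simp add: power2_eq_square)
    finally have "1 - 4/r^2 = (2*d/r)^2" .
    thus ?thesis unfolding s_def using dpos r0 by simp
  qed
  have rr2: "r*r = 4 + 4*d*d" using dsq by (simp add: field_simps power2_eq_square)
  have "x * r * (1 + s) = (r/2 - d)*(r + 2*d)" unfolding s_eq x_def using r0
    by (simp add: field_simps)
  also have "\<dots> = (r*r)/2 - 2*d*d" by (simp add: algebra_simps)
  also have "\<dots> = 2" using rr2 by (simp add: field_simps)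
  finally have xrs: "x * r * (1 + s) = 2" .
  have s0: "s \<ge> 0" unfolding s_eq using dpos r0 by simp
  define L where "L = 1 / r powr (1 + \<beta>) * ((1 + \<beta>) powr (1 + \<beta>) / \<beta> powr \<beta>)"
  define M where "M = (2 / r) powr (1 + \<beta>) * (4 / r^2) powr (- \<beta>) * (s + 1) powr (\<beta> - 1)"
  define R where "R = x powr (1 - \<beta>)"
  have Lp: "L > 0" unfolding L_def using r0 b0 by simp
  have Mp: "M > 0" unfolding M_def using r0 s0 by simp
  have Rp: "R > 0" unfolding R_def using x0 by simp
  have lr2: "ln (r^2) = 2 * ln r" using r0 by (simp add: ln_realpow)
  have lnM: "ln M = (1+\<beta>) * (ln 2 - ln r) - \<beta> * (ln 4 - 2 * ln r) + (\<beta> - 1) * ln (s+1)"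
    unfolding M_def using r0 s0 lr2 by (simp add: ln_mult ln_powr ln_div)
  have lnx: "ln x + ln r + ln (1+s) = ln 2"
  proof -
    have "ln (x * r * (1 + s)) = ln x + ln r + ln (1+s)" using x0 r0 s0 by (simp add: ln_mult)
    thus ?thesis using xrs by simp
  qed
  have ln4: "ln (4::real) = 2 * ln 2"
    using ln_realpow[of 2 2] by simp
  have lnR: "ln R = (1 - \<beta>) * ln x" unfolding R_def using x0 by (simp add: ln_powr)
  have lr': "ln r = ln 2 - ln x - ln (1+s)" using lnx by simp
  have "ln M = ln R" unfolding lnM lnR ln4 lr' by (simp add: algebra_simps)
  hence MR: "M = R" using Mp Rp by simp
  have lnL: "ln L = (1+\<beta>) * ln (1+\<beta>) - \<beta> * ln \<beta> - (1+\<beta>) * ln r"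
    unfolding L_def using r0 b0 by (simp add: ln_mult ln_powr ln_div)
  have lnr: "ln r = ln (1+u) - ln x" unfolding rxe using u0 x0 by (simp add: ln_div)
  have lnu: "ln u = 2 * ln x" unfolding u_def using x0 by (simp add: ln_realpow)
  define A where "A = u*(1+\<beta>)/(\<beta>*(1+u))"
  define B where "B = (1+\<beta>)/(1+u)"
  have A0: "A > 0" unfolding A_def using u0 b0 by simp
  have B0: "B > 0" unfolding B_def using u0 b0 by simp
  have A1: "A \<noteq> 1"
  proof
    assume "A = 1"
    hence "u*(1+\<beta>) = \<beta>*(1+u)" unfolding A_def using u0 b0 by (simp add: field_simps)
    hence "u = \<beta>" by (simp add: algebra_simps)
    thus False using ub by simp
  qed
  have lA: "ln A < A - 1"
    using ln_le_minus_one[OF A0] ln_eq_minus_one[OF A0] A1 by force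
  have lB: "ln B \<le> B - 1" using ln_le_minus_one[OF B0] .
  have bA: "\<beta> * A = u*(1+\<beta>)/(1+u)" unfolding A_def using b0 by simp
  have "\<beta> * (A - 1) + (B - 1) = \<beta> * A + B - (1 + \<beta>)" by (simp add: algebra_simps)
  also have "\<dots> = (u*(1+\<beta>) + (1+\<beta>))/(1+u) - (1+\<beta>)" unfolding bA B_def
    by (simp add: add_divide_distrib)
  also have "\<dots> = ((1+\<beta>)*(1+u))/(1+u) - (1+\<beta>)" by (simp add: algebra_simps)
  also have "\<dots> = 0" using u0 by simp
  finally have "\<beta> * (A - 1) + (B - 1) = 0" .
  hence key: "\<beta> * ln A + ln B < 0" using lA lB b0
    by (smt (verit) mult_strict_left_mono)
  have lnA: "ln A = ln u + ln (1+\<beta>) - ln \<beta> - ln (1+u)" unfolding A_def using u0 b0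
    by (simp add: ln_mult ln_div)
  have lnB: "ln B = ln (1+\<beta>) - ln (1+u)" unfolding B_def using u0 b0 by (simp add: ln_div)
  have "ln L < ln R" unfolding lnL lnR lnr
    using key unfolding lnA lnB lnu by (simp add: algebra_simps)
  hence "L < R" using Lp Rp by simp
  thus ?thesis using MR unfolding L_def M_def R_def x_def d_def s_def by (simp add: add.commute)
qed

end
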